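(* Let $\kappa\ge3$ and $\lambda\ge0$ be integers with $\lambda\le\kappa-2$, and let $\mathcal{G}=((\gamma_i,\alpha_i,\beta_i))_{i=1}^{g+1}$ be a $(\kappa,\lambda)$-graphical sequence. For $1\le i\le g$ let $\mathfrak{R}_i=\alpha_i+2\sqrt{\beta_i\gamma_i}$. Then: (i) $\mathfrak{R}_i\ge\mathfrak{R}_1$ for all $1\le i\le g$, with equality if and only if $(\gamma_i,\alpha_i,\beta_i)\in\{(1,\lambda,\kappa-\lambda-1),(\kappa-\lambda-1,\lambda,1)\}$; (ii) for any $2\le i\le g$, if $\beta_i\ge\gamma_i$ then $\mathfrak{R}_{i-1}<\mathfrak{R}_i$; (iii) for any $2\le i\le g-1$, if $\beta_i\le\gamma_i$ then $\mathfrak{R}_{i+1}<\mathfrak{R}_i$. In particular, the sequence $(\mathfrak{R}_i)_{i=1}^g$ is unimodal, i.e. there is $1\le t\le g$ with $\mathfrak{R}_1\le\dots\le\mathfrak{R}_t$ and $\mathfrak{R}_t\ge\dots\ge\mathfrak{R}_g$.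
   Context: For integers $\kappa\ge3$, $0\le\lambda\le\kappa-2$, let $V_{\kappa,\lambda}=\{(\gamma,\alpha,\beta)\in\mathbb{N}_0^3:\beta,\gamma\ge1,\ \gamma+\alpha+\beta=\kappa,\ \alpha\ge\max\{\lambda+1-\beta,\lambda+1-\gamma\}\}$. A $(\kappa,\lambda)$-graphical sequence is a sequence $\mathcal{G}=((\gamma_i,\alpha_i,\beta_i))_{i=1}^{g+1}$ of pairwise distinct elements of $\mathbb{N}_0^3$ such that: $(\gamma_i,\alpha_i,\beta_i)\in V_{\kappa,\lambda}$ for $1\le i\le g$; $(\gamma_1,\alpha_1,\beta_1)=(1,\lambda,\kappa-\lambda-1)$; $\beta_i\ge\beta_{i+1}$ for $1\le i\le g-1$ and $\gamma_i\le\gamma_{i+1}$ for $1\le i\le g$; $\beta_{g+1}=0$ and $\gamma_{g+1}+\alpha_{g+1}=\kappa$. *)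

theory Defs
  imports Complex_Main
begin

definition V_set :: "nat \<Rightarrow> nat \<Rightarrow> (nat \<times> nat \<times> nat) set" where
  "V_set kap lam = {(gam, alp, bet). bet \<ge> 1 \<and> gam \<ge> 1 \<and> gam + alp + bet = kap \<and>
      int alp \<ge> max (int lam + 1 - int bet) (int lam + 1 - int gam)}"

definition graphical_seq :: "nat \<Rightarrow> nat \<Rightarrow> nat \<Rightarrow> (nat \<Rightarrow> nat \<times> nat \<times> nat) \<Rightarrow> bool" where
  "graphical_seq kap lam g x \<longleftrightarrow>
     inj_on x {1..g+1} \<and>
     (\<forall>i\<in>{1..g}. x i \<in> V_set kap lam) \<and>
     x 1 = (1, lam, kap - lam - 1) \<and>
     (\<forall>i. 1 \<le> i \<and> i \<le> g - 1 \<longrightarrow> snd (snd (x i)) \<ge> snd (snd (x (i+1)))) \<and>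
     (\<forall>i. 1 \<le> i \<and> i \<le> g \<longrightarrow> fst (x i) \<le> fst (x (i+1))) \<and>
     snd (snd (x (g+1))) = 0 \<and> fst (x (g+1)) + fst (snd (x (g+1))) = kap"

definition Rfrak :: "(nat \<Rightarrow> nat \<times> nat \<times> nat) \<Rightarrow> nat \<Rightarrow> real" where
  "Rfrak x i = real (fst (snd (x i))) + 2 * sqrt (real (snd (snd (x i))) * real (fst (x i)))"

end

theory Submission
  imports Defs
begin

lemma R_eq:
  assumes "c + a + b = (k::nat)"
  shows "real a + 2*sqrt(real b * real c) = real k - (sqrt (real b) - sqrt (real c))^2"
proof -
  have "(sqrt (real b) - sqrt (real c))^2 = real b + real c - 2*sqrt(real b * real c)"
    by (simp add: power2_diff real_sqrt_mult)
  moreover have "real k = real c + real a + real b" using assms by simp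
  ultimately show ?thesis by simp
qed

lemma bound:
  fixes b c m :: nat
  assumes "1\<le>b" "1\<le>c" "b\<le>m" "c\<le>m"
  shows "\<bar>sqrt b - sqrt c\<bar> \<le> sqrt m - 1"
    and "\<bar>sqrt b - sqrt c\<bar> = sqrt m - 1 \<longleftrightarrow> (b=m\<and>c=1)\<or>(b=1\<and>c=m)"
proof -
  have sb: "sqrt b \<le> sqrt m" "sqrt c \<le> sqrt m" using assms by auto
  have s1: "1 \<le> sqrt b" "1 \<le> sqrt c" using assms by auto
  have strb: "b < m \<Longrightarrow> sqrt b < sqrt m" by simp
  have strc: "c < m \<Longrightarrow> sqrt c < sqrt m" by simp
  have strb1: "1 < b \<Longrightarrow> 1 < sqrt b" by simp
  have strc1: "1 < c \<Longrightarrow> 1 < sqrt c" by simp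
  show "\<bar>sqrt b - sqrt c\<bar> \<le> sqrt m - 1" using sb s1 by linarith
  show "\<bar>sqrt b - sqrt c\<bar> = sqrt m - 1 \<longleftrightarrow> (b=m\<and>c=1)\<or>(b=1\<and>c=m)"
  proof
    assume e: "\<bar>sqrt b - sqrt c\<bar> = sqrt m - 1"
    show "(b=m\<and>c=1)\<or>(b=1\<and>c=m)"
    proof (cases "c \<le> b")
      case True
      then have "sqrt c \<le> sqrt b" by simp
      then have "sqrt b - sqrt c = sqrt m - 1" using e by linarith
      then have "b = m" "c = 1" using sb s1 strb strc1 assms by (linarith, linarith)
      then show ?thesis by simp
    next
      case False
      then have "sqrt b \<le> sqrt c" by simp
      then have "sqrt c - sqrt b = sqrt m - 1" using e by linarith
      then have "c = m" "b = 1" using sb s1 strc strb1 assms by (linarith, linarith)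
      then show ?thesis by simp
    qed
  next
    assume "(b=m\<and>c=1)\<or>(b=1\<and>c=m)"
    then show "\<bar>sqrt b - sqrt c\<bar> = sqrt m - 1" using s1 sb by auto
  qed
qed

lemma cmpB:
  fixes b' b c c' :: nat
  assumes "b \<le> b'" "c \<le> b" "c' \<le> c" "(b',c') \<noteq> (b,c)"
  shows "(sqrt b - sqrt c)^2 < (sqrt b' - sqrt c')^2"
proof -
  have h: "sqrt b \<le> sqrt b'" "sqrt c \<le> sqrt b" "sqrt c' \<le> sqrt c" using assms by auto
  have "b < b' \<or> c' < c" using assms by auto
  then have "sqrt b < sqrt b' \<or> sqrt c' < sqrt c" by auto
  then have "sqrt b - sqrt c < sqrt b' - sqrt c'" using h by linarith
  moreover have "0 \<le> sqrt b - sqrt c" using h by linarith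
  ultimately show ?thesis by (simp add: power_strict_mono)
qed

lemma chain_up:
  fixes f :: "nat \<Rightarrow> real"
  assumes "\<And>n. lo \<le> n \<Longrightarrow> n < hi \<Longrightarrow> f n \<le> f (Suc n)" "lo \<le> i" "i \<le> j" "j \<le> hi"
  shows "f i \<le> f j"
  using assms(3,4)
proof (induction j rule: dec_induct)
  case base then show ?case by simp
next
  case (step n)
  then have "f n \<le> f (Suc n)" using assms(1,2) by auto
  then show ?case using step by simp
qed

lemma chain_down:
  fixes f :: "nat \<Rightarrow> real"
  assumes "\<And>n. lo \<le> n \<Longrightarrow> n < hi \<Longrightarrow> f (Suc n) \<le> f n" "lo \<le> i" "i \<le> j" "j \<le> hi"
  shows "f j \<le> f i"
  using chain_up[of lo hi "\<lambda>n. - f n" i j] assms by auto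

lemma chain_nat:
  fixes b c :: "nat \<Rightarrow> nat"
  assumes "\<And>n. 1 \<le> n \<Longrightarrow> n < g \<Longrightarrow> b (Suc n) \<le> b n \<and> c n \<le> c (Suc n)"
     "1 \<le> k" "k \<le> j" "j \<le> g"
  shows "b j \<le> b k \<and> c k \<le> c j"
  using assms(3,4)
proof (induction j rule: dec_induct)
  case base then show ?case by simp
next
  case (step n)
  then have "b (Suc n) \<le> b n \<and> c n \<le> c (Suc n)" using assms(1,2) by auto
  then show ?case using step by auto
qed

theorem lemma3p3:
  fixes kap lam g :: nat and x :: "nat \<Rightarrow> nat \<times> nat \<times> nat"
  assumes "kap \<ge> 3" and "lam \<le> kap - 2"
    and "graphical_seq kap lam g x"
  shows "(\<forall>i. 1 \<le> i \<and> i \<le> g \<longrightarrow>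
            Rfrak x i \<ge> Rfrak x 1 \<and>
            (Rfrak x i = Rfrak x 1 \<longleftrightarrow>
               x i \<in> {(1, lam, kap - lam - 1), (kap - lam - 1, lam, 1)}))
       \<and> (\<forall>i. 2 \<le> i \<and> i \<le> g \<and> snd (snd (x i)) \<ge> fst (x i) \<longrightarrow> Rfrak x (i - 1) < Rfrak x i)
       \<and> (\<forall>i. 2 \<le> i \<and> i \<le> g - 1 \<and> snd (snd (x i)) \<le> fst (x i) \<longrightarrow> Rfrak x (i + 1) < Rfrak x i)
       \<and> (\<exists>t. 1 \<le> t \<and> t \<le> g \<and>
            (\<forall>i j. 1 \<le> i \<and> i \<le> j \<and> j \<le> t \<longrightarrow> Rfrak x i \<le> Rfrak x j) \<and>
            (\<forall>i j. t \<le> i \<and> i \<le> j \<and> j \<le> g \<longrightarrow> Rfrak x j \<le> Rfrak x i))"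
proof -
  define b where "b k = snd (snd (x k))" for k
  define c where "c k = fst (x k)" for k
  define a where "a k = fst (snd (x k))" for k
  define m where "m = kap - lam - 1"
  define d where "d k = (sqrt (real (b k)) - sqrt (real (c k)))^2" for k
  have xeq: "x k = (c k, a k, b k)" for k by (simp add: a_def b_def c_def)
  note G = assms(3)[unfolded graphical_seq_def]
  have inj: "inj_on x {1..g+1}" using G by blast
  have V: "\<And>i. i\<in>{1..g} \<Longrightarrow> x i \<in> V_set kap lam" using G by blast
  have x1: "x 1 = (1, lam, kap - lam - 1)" using G by blast
  have bmono: "\<And>i. 1 \<le> i \<Longrightarrow> i \<le> g - 1 \<Longrightarrow> b (i+1) \<le> b i" using G by (simp add: b_def)
  have cmono: "\<And>i. 1 \<le> i \<Longrightarrow> i \<le> g \<Longrightarrow> c i \<le> c (i+1)" using G by (simp add: c_def)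
  have last: "b (g+1) = 0" using G by (simp add: b_def)
  have m1: "m \<ge> 1" and km: "kap = m + lam + 1" using assms(1,2) by (auto simp: m_def)
  have b1: "b 1 = m" "c 1 = 1" "a 1 = lam" using x1 by (auto simp: b_def c_def a_def m_def)
  have g1: "g \<ge> 1"
  proof (rule ccontr)
    assume "\<not> g \<ge> 1" then have "g = 0" by simp
    then show False using last b1 m1 by simp
  qed
  have Vi: "b i \<ge> 1 \<and> c i \<ge> 1 \<and> c i + a i + b i = kap \<and> b i \<le> m \<and> c i \<le> m"
    if "1 \<le> i" "i \<le> g" for i
  proof -
    have "x i \<in> V_set kap lam" using V that by auto
    then have "(c i, a i, b i) \<in> V_set kap lam" using xeq by metis
    then show ?thesis unfolding V_set_def m_def by auto
  qed
  have Req: "Rfrak x i = real kap - d i" if "1 \<le> i" "i \<le> g" for i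
    using R_eq[of "c i" "a i" "b i" kap] Vi[OF that]
    by (simp add: Rfrak_def d_def a_def b_def c_def)
  have d1: "d 1 = (sqrt m - 1)^2" using b1 by (simp add: d_def)
  have sm1: "sqrt (real m) - 1 \<ge> 0" using m1 by simp
  have P1: "Rfrak x i \<ge> Rfrak x 1 \<and>
            (Rfrak x i = Rfrak x 1 \<longleftrightarrow>
               x i \<in> {(1, lam, kap - lam - 1), (kap - lam - 1, lam, 1)})"
    if i: "1 \<le> i" "i \<le> g" for i
  proof -
    note vi = Vi[OF i]
    note bd = bound[of "b i" "c i" m]
    have dd: "d i = \<bar>sqrt (b i) - sqrt (c i)\<bar>^2" by (simp add: d_def)
    have le: "d i \<le> d 1" unfolding dd d1
      using bd(1) vi sm1 power_mono[of "\<bar>sqrt (b i) - sqrt (c i)\<bar>" "sqrt m - 1" 2] by simp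
    have eqv: "d i = d 1 \<longleftrightarrow> (b i = m \<and> c i = 1) \<or> (b i = 1 \<and> c i = m)"
    proof -
      have "d i = d 1 \<longleftrightarrow> \<bar>sqrt (b i) - sqrt (c i)\<bar> = sqrt m - 1"
        unfolding dd d1 using sm1 power2_eq_iff_nonneg[of "\<bar>sqrt (b i) - sqrt (c i)\<bar>" "sqrt m - 1"]
        by (simp del: power2_abs)
      then show ?thesis using bd(2) vi by simp
    qed
    have xin: "x i \<in> {(1, lam, kap - lam - 1), (kap - lam - 1, lam, 1)} \<longleftrightarrow>
        (b i = m \<and> c i = 1) \<or> (b i = 1 \<and> c i = m)"
      using vi km unfolding xeq m_def by auto
    show ?thesis using le eqv xin Req[OF i] Req[of 1] g1 by auto
  qed
  have P2: "Rfrak x (i - 1) < Rfrak x i"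
    if i: "2 \<le> i" "i \<le> g" "b i \<ge> c i" for i
  proof -
    have v1: "b (i-1) \<ge> b i" using bmono[of "i-1"] i by simp
    have v2: "c (i-1) \<le> c i" using cmono[of "i-1"] i by simp
    have ne: "x (i-1) \<noteq> x i" using inj i unfolding inj_on_def by force
    have "(b (i-1), c (i-1)) \<noteq> (b i, c i)"
    proof
      assume "(b (i-1), c (i-1)) = (b i, c i)"
      moreover have "a (i-1) = a i" using Vi[of "i-1"] Vi[of i] i calculation by auto
      ultimately show False using ne xeq by (metis prod.inject)
    qed
    then have "d i < d (i-1)" unfolding d_def using cmpB v1 v2 i(3) by blast
    then show ?thesis using Req[of i] Req[of "i-1"] i by simp
  qed
  have P3: "Rfrak x (i + 1) < Rfrak x i"
    if i: "2 \<le> i" "i \<le> g - 1" "b i \<le> c i" for i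
  proof -
    have v1: "b (i+1) \<le> b i" using bmono[of "i"] i by simp
    have v2: "c (i+1) \<ge> c i" using cmono[of "i"] i by simp
    have ne: "x (i+1) \<noteq> x i" using inj i unfolding inj_on_def by force
    have "(c (i+1), b (i+1)) \<noteq> (c i, b i)"
    proof
      assume "(c (i+1), b (i+1)) = (c i, b i)"
      moreover have "i + 1 \<le> g" using i by linarith
      moreover have "a (i+1) = a i" using Vi[of "i+1"] Vi[of i] i calculation by auto
      ultimately show False using ne xeq by (metis prod.inject)
    qed
    then have "(sqrt (c i) - sqrt (b i))^2 < (sqrt (c (i+1)) - sqrt (b (i+1)))^2"
      using cmpB v1 v2 i(3) by blast
    then have "d i < d (i+1)" unfolding d_def by (simp add: power2_commute)
    then show ?thesis using Req[of i] Req[of "i+1"] i by simp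
  qed
  define S where "S = {k\<in>{1..g}. c k \<le> b k}"
  define t0 where "t0 = Max S"
  have S1: "1 \<in> S" using b1 m1 g1 by (simp add: S_def)
  have fS: "finite S" by (simp add: S_def)
  have t0S: "t0 \<in> S" using S1 fS t0_def by (metis Max_in empty_iff)
  have t0: "1 \<le> t0" "t0 \<le> g" "c t0 \<le> b t0" using t0S by (auto simp: S_def)
  have below: "c k \<le> b k" if "1 \<le> k" "k \<le> t0" for k
  proof -
    have "b t0 \<le> b k \<and> c k \<le> c t0"
      using chain_nat[of g b c k t0] bmono cmono that t0 by fastforce
    then show ?thesis using t0 by linarith
  qed
  have above: "b k < c k" if "t0 < k" "k \<le> g" for k
  proof (rule ccontr)
    assume "\<not> b k < c k"
    then have "k \<in> S" using that t0 by (auto simp: S_def)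
    then have "k \<le> t0" using fS t0_def by simp
    then show False using that by simp
  qed
  have up: "Rfrak x n \<le> Rfrak x (Suc n)" if "1 \<le> n" "n < t0" for n
    using P2[of "Suc n"] below[of "Suc n"] that t0 by simp
  have down: "Rfrak x (Suc n) \<le> Rfrak x n" if "t0 < n" "n < g" for n
  proof -
    have "n \<le> g - 1" "2 \<le> n" using that t0 by linarith+
    then show ?thesis using P3[of n] above[of n] that by simp
  qed
  define t where "t = (if t0 < g \<and> Rfrak x t0 < Rfrak x (t0+1) then t0+1 else t0)"
  have T: "1 \<le> t \<and> t \<le> g \<and>
            (\<forall>i j. 1 \<le> i \<and> i \<le> j \<and> j \<le> t \<longrightarrow> Rfrak x i \<le> Rfrak x j) \<and>
            (\<forall>i j. t \<le> i \<and> i \<le> j \<and> j \<le> g \<longrightarrow> Rfrak x j \<le> Rfrak x i)"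
  proof (cases "t0 < g \<and> Rfrak x t0 < Rfrak x (t0+1)")
    case True
    then have tt: "t = t0 + 1" by (simp add: t_def)
    have u: "Rfrak x n \<le> Rfrak x (Suc n)" if "1 \<le> n" "n < t" for n
      using up[of n] True that tt by (cases "n = t0") auto
    have dn: "Rfrak x (Suc n) \<le> Rfrak x n" if "t \<le> n" "n < g" for n
      using down[of n] that tt by simp
    show ?thesis using tt True t0 chain_up[of 1 t "Rfrak x", OF u] chain_down[of t g "Rfrak x", OF dn]
      by auto
  next
    case False
    then have tt: "t = t0" by (simp add: t_def)
    have u: "Rfrak x n \<le> Rfrak x (Suc n)" if "1 \<le> n" "n < t" for n
      using up[of n] that tt by simp
    have dn: "Rfrak x (Suc n) \<le> Rfrak x n" if "t \<le> n" "n < g" for n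
      using down[of n] False that tt by (cases "n = t0") auto
    show ?thesis using tt t0 chain_up[of 1 t "Rfrak x", OF u] chain_down[of t g "Rfrak x", OF dn]
      by auto
  qed
  show ?thesis
    using P1 T
    using P2 P3 unfolding b_def c_def
    by blast
qed

end
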